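(* Let $C\subseteq\mathbb{C}$ be a subring, $D>0$, and let $F(A;X)=\big(\sum_i|f_i(A;X)|^2\big)^{\varepsilon/2}$ be an absolute polynomial power in $A=(A_1,\dots,A_m)$, $X=(X_1,\dots,X_n)$, with finitely many $f_i\in C[A,X]$ of degree at most $D$ and $\varepsilon\ge0$ rational. Assume $F$ is symmetric in $X$: $F(A;X_{\pi(1)},\dots,X_{\pi(n)})=F(A;X)$ for all permutations $\pi\in S_n$ (as functions on $\mathbb{C}^{m+n}$). Then there is an absolute polynomial power $\tilde F(A;\Sigma)$ in $A$ and $\Sigma=(\Sigma_1,\dots,\Sigma_n)$ with coefficients in $C$ such that $F(A;X)\sim\tilde F(A;\sigma_1(X),\dots,\sigma_n(X))$ on $\mathbb{C}^{m+n}$, with implied constants depending only on $\varepsilon$, $D$, $n$ and the number of terms of $F$.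
   Context: An absolute polynomial power with coefficients in $C$ is an expression $(\sum_i|P_i|^2)^{\varepsilon/2}$ with finitely many polynomials $P_i$ with coefficients in $C$ and $\varepsilon\ge0$ rational. The elementary symmetric polynomials $\sigma_j\in\mathbb{Z}[X_1,\dots,X_n]$ are defined by $\prod_{i=1}^n(T+X_i)=T^n+\sum_{j=1}^n\sigma_jT^{n-j}$. $\sim$ means each side is bounded by a positive constant times the other. *)

theory Defs
  imports Complex_Main "HOL-Computational_Algebra.Polynomial" "HOL-Combinatorics.Permutations"
begin

text \<open>Multivariate polynomials in the variables indexed by 0,...,N-1, represented by
  their coefficient function on exponent vectors (nat => nat).\<close>
type_synonym mpoly = "(nat \<Rightarrow> nat) \<Rightarrow> complex"

definition is_mpoly :: "nat \<Rightarrow> complex set \<Rightarrow> mpoly \<Rightarrow> bool" where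
  "is_mpoly N C p \<longleftrightarrow> finite {\<alpha>. p \<alpha> \<noteq> 0} \<and>
     (\<forall>\<alpha>. p \<alpha> \<noteq> 0 \<longrightarrow> (\<forall>i\<ge>N. \<alpha> i = 0) \<and> p \<alpha> \<in> C)"

definition mdeg_le :: "nat \<Rightarrow> mpoly \<Rightarrow> nat \<Rightarrow> bool" where
  "mdeg_le N p D \<longleftrightarrow> (\<forall>\<alpha>. p \<alpha> \<noteq> 0 \<longrightarrow> (\<Sum>i<N. \<alpha> i) \<le> D)"

definition meval :: "nat \<Rightarrow> mpoly \<Rightarrow> (nat \<Rightarrow> complex) \<Rightarrow> complex" where
  "meval N p z = (\<Sum>\<alpha>\<in>{\<alpha>. p \<alpha> \<noteq> 0}. p \<alpha> * (\<Prod>i<N. z i ^ \<alpha> i))"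

text \<open>Absolute polynomial power (sum_i |P_i|^2)^(eps/2), with the convention t^0 = 1.\<close>
definition apow :: "nat \<Rightarrow> mpoly list \<Rightarrow> real \<Rightarrow> (nat \<Rightarrow> complex) \<Rightarrow> real" where
  "apow N ps \<epsilon> z = (if \<epsilon> = 0 then 1
      else (\<Sum>p\<leftarrow>ps. (cmod (meval N p z))\<^sup>2) powr (\<epsilon> / 2))"

definition subring_C :: "complex set \<Rightarrow> bool" where
  "subring_C C \<longleftrightarrow> 0 \<in> C \<and> 1 \<in> C \<and>
     (\<forall>x\<in>C. \<forall>y\<in>C. x + y \<in> C \<and> x - y \<in> C \<and> x * y \<in> C)"

definition esym :: "nat \<Rightarrow> (nat \<Rightarrow> complex) \<Rightarrow> nat \<Rightarrow> complex" where
  "esym n x j = coeff (\<Prod>i<n. [:x i, 1:]) (n - j)"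

text \<open>Variables 0..m-1 are A, variables m..m+n-1 are X.\<close>
definition permvars :: "nat \<Rightarrow> nat \<Rightarrow> (nat \<Rightarrow> nat) \<Rightarrow> (nat \<Rightarrow> complex) \<Rightarrow> nat \<Rightarrow> complex" where
  "permvars m n \<pi> z = (\<lambda>i. if i < m then z i else if i < m + n then z (m + \<pi> (i - m)) else z i)"

definition symvars :: "nat \<Rightarrow> nat \<Rightarrow> (nat \<Rightarrow> complex) \<Rightarrow> nat \<Rightarrow> complex" where
  "symvars m n z = (\<lambda>i. if i < m then z i
      else if i < m + n then esym n (\<lambda>j. z (m + j)) (i - m + 1) else 0)"

end

theory Submission
  imports Defs "HOL-Analysis.Analysis"
begin


datatype pexp = PC complex | PV nat | PA pexp pexp | PM pexp pexp

fun ev :: "pexp \<Rightarrow> (nat \<Rightarrow> complex) \<Rightarrow> complex" where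
  "ev (PC c) z = c" | "ev (PV i) z = z i" | "ev (PA a b) z = ev a z + ev b z"
| "ev (PM a b) z = ev a z * ev b z"

fun pok :: "complex set \<Rightarrow> nat \<Rightarrow> pexp \<Rightarrow> bool" where
  "pok C N (PC c) = (c \<in> C)" | "pok C N (PV i) = (i < N)"
| "pok C N (PA a b) = (pok C N a \<and> pok C N b)"
| "pok C N (PM a b) = (pok C N a \<and> pok C N b)"

definition PF :: "complex set \<Rightarrow> nat \<Rightarrow> ((nat \<Rightarrow> complex) \<Rightarrow> complex) \<Rightarrow> bool" where
  "PF C N h \<longleftrightarrow> (\<exists>e. pok C N e \<and> h = ev e)"

lemma PF_const: "c \<in> C \<Longrightarrow> PF C N (\<lambda>z. c)"
  unfolding PF_def by (rule exI[of _ "PC c"]) auto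

lemma PF_var: "i < N \<Longrightarrow> PF C N (\<lambda>z. z i)"
  unfolding PF_def by (rule exI[of _ "PV i"]) auto

lemma PF_add: "PF C N f \<Longrightarrow> PF C N g \<Longrightarrow> PF C N (\<lambda>z. f z + g z)"
  unfolding PF_def by (elim exE conjE, rename_tac a b, rule_tac x="PA a b" in exI) auto

lemma PF_mult: "PF C N f \<Longrightarrow> PF C N g \<Longrightarrow> PF C N (\<lambda>z. f z * g z)"
  unfolding PF_def by (elim exE conjE, rename_tac a b, rule_tac x="PM a b" in exI) auto

lemma subring_facts:
  assumes "subring_C C"
  shows "0 \<in> C" "1 \<in> C" "-1 \<in> C" "x \<in> C \<Longrightarrow> y \<in> C \<Longrightarrow> x + y \<in> C"
    "x \<in> C \<Longrightarrow> y \<in> C \<Longrightarrow> x * y \<in> C"  "x \<in> C \<Longrightarrow> y \<in> C \<Longrightarrow> x - y \<in> C"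
proof -
  have a: "0 \<in> C" "1 \<in> C" "\<forall>x\<in>C. \<forall>y\<in>C. x + y \<in> C \<and> x - y \<in> C \<and> x * y \<in> C"
    using assms unfolding subring_C_def by auto
  then show "0 \<in> C" "1 \<in> C" by auto
  show "-1 \<in> C" using a by (metis diff_0)
  show "x \<in> C \<Longrightarrow> y \<in> C \<Longrightarrow> x + y \<in> C" "x \<in> C \<Longrightarrow> y \<in> C \<Longrightarrow> x * y \<in> C"
    "x \<in> C \<Longrightarrow> y \<in> C \<Longrightarrow> x - y \<in> C" using a by auto
qed

lemma PF_neg: "subring_C C \<Longrightarrow> PF C N f \<Longrightarrow> PF C N (\<lambda>z. - f z)"
  using PF_mult[OF PF_const[of "-1" C N], of f] subring_facts(3)[of C] by simp

lemma PF_diff: "subring_C C \<Longrightarrow> PF C N f \<Longrightarrow> PF C N g \<Longrightarrow> PF C N (\<lambda>z. f z - g z)"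
  using PF_add[of C N f "\<lambda>z. - g z"] PF_neg[of C N g] by simp

lemma PF_sum: "finite S \<Longrightarrow> subring_C C \<Longrightarrow> (\<forall>x\<in>S. PF C N (f x)) \<Longrightarrow> PF C N (\<lambda>z. \<Sum>x\<in>S. f x z)"
proof (induction S rule: finite_induct)
  case empty then show ?case using PF_const[of 0 C N] subring_facts by simp
next
  case (insert a S) then show ?case using PF_add[of C N "f a" "\<lambda>z. \<Sum>x\<in>S. f x z"] by simp
qed

lemma PF_prod: "finite S \<Longrightarrow> subring_C C \<Longrightarrow> (\<forall>x\<in>S. PF C N (f x)) \<Longrightarrow> PF C N (\<lambda>z. \<Prod>x\<in>S. f x z)"
proof (induction S rule: finite_induct)
  case empty then show ?case using PF_const[of 1 C N] subring_facts by simp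
next
  case (insert a S) then show ?case using PF_mult[of C N "f a" "\<lambda>z. \<Prod>x\<in>S. f x z"] by simp
qed

lemma PF_power: "subring_C C \<Longrightarrow> PF C N f \<Longrightarrow> PF C N (\<lambda>z. f z ^ k)"
  using PF_prod[of "{..<k}" C N "\<lambda>_. f"] by simp

lemma pok_mono: "pok C N e \<Longrightarrow> N \<le> N' \<Longrightarrow> pok C N' e"
  by (induction e) auto

lemma PF_mono: "PF C N f \<Longrightarrow> N \<le> N' \<Longrightarrow> PF C N' f"
  unfolding PF_def using pok_mono by blast

lemma ev_dep: "pok C N e \<Longrightarrow> (\<forall>i<N. z i = w i) \<Longrightarrow> ev e z = ev e w"
  by (induction e) auto

lemma PF_dep: "PF C N f \<Longrightarrow> (\<forall>i<N. z i = w i) \<Longrightarrow> f z = f w"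
  unfolding PF_def using ev_dep by blast

lemma pok_subst: "pok C N e \<Longrightarrow> (\<forall>i<N. PF C N' (\<lambda>z. \<rho> z i)) \<Longrightarrow> PF C N' (\<lambda>z. ev e (\<rho> z))"
proof (induction e)
  case (PC c) then show ?case using PF_const by simp
next
  case (PV i) then show ?case by simp
next
  case (PA a b) then show ?case using PF_add[of C N' "\<lambda>z. ev a (\<rho> z)" "\<lambda>z. ev b (\<rho> z)"] by simp
next
  case (PM a b) then show ?case using PF_mult[of C N' "\<lambda>z. ev a (\<rho> z)" "\<lambda>z. ev b (\<rho> z)"] by simp
qed

lemma PF_subst: "PF C N f \<Longrightarrow> (\<forall>i<N. PF C N' (\<lambda>z. \<rho> z i)) \<Longrightarrow> PF C N' (\<lambda>z. f (\<rho> z))"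
  unfolding PF_def[of C N f] using pok_subst by blast

lemma ev_cont: "continuous_on UNIV (\<lambda>t::complex. ev e (\<lambda>i. a i + t * b i))"
  by (induction e) (auto intro!: continuous_intros)

lemma PF_cont: "PF C N f \<Longrightarrow> continuous_on UNIV (\<lambda>t::complex. f (\<lambda>i. a i + t * b i))"
  unfolding PF_def using ev_cont by blast

lemma meval_superset: "finite S \<Longrightarrow> {\<alpha>. p \<alpha> \<noteq> 0} \<subseteq> S \<Longrightarrow>
   meval N p z = (\<Sum>\<alpha>\<in>S. p \<alpha> * (\<Prod>i<N. z i ^ \<alpha> i))"
  unfolding meval_def by (rule sum.mono_neutral_left) auto

lemma subring_sum: "finite S \<Longrightarrow> subring_C C \<Longrightarrow> (\<forall>x\<in>S. f x \<in> C) \<Longrightarrow> sum f S \<in> C"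
  by (induction S rule: finite_induct) (auto intro: subring_facts)

lemma subring_prod: "finite S \<Longrightarrow> subring_C C \<Longrightarrow> (\<forall>x\<in>S. f x \<in> C) \<Longrightarrow> prod f S \<in> C"
  by (induction S rule: finite_induct) (auto intro: subring_facts)

lemma mpoly_PF: "subring_C C \<Longrightarrow> is_mpoly N C p \<Longrightarrow> PF C N (meval N p)"
  unfolding meval_def is_mpoly_def
  by (auto intro!: PF_sum PF_mult PF_const PF_prod PF_power PF_var)

lemma pok_mpoly: "subring_C C \<Longrightarrow> pok C N e \<Longrightarrow> \<exists>p. is_mpoly N C p \<and> (\<forall>z. meval N p z = ev e z)"
proof (induction e)
  case (PC c)
  let ?p = "\<lambda>\<alpha>::nat\<Rightarrow>nat. if \<alpha> = (\<lambda>_. 0) then c else 0"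
  have "is_mpoly N C ?p" using PC unfolding is_mpoly_def
    by (auto intro: finite_subset[of _ "{\<lambda>_. 0}"])
  moreover have "meval N ?p z = c" for z
    by (subst meval_superset[of "{\<lambda>_. 0}"]) auto
  ultimately show ?case by auto
next
  case (PV i)
  define d where "d = (\<lambda>j::nat. if j = i then 1 else (0::nat))"
  let ?p = "\<lambda>\<alpha>::nat\<Rightarrow>nat. if \<alpha> = d then (1::complex) else 0"
  have "is_mpoly N C ?p" using PV subring_facts[OF PV(1)] unfolding is_mpoly_def d_def
    by (auto intro: finite_subset[of _ "{d}"])
  moreover have "meval N ?p z = z i" for z
  proof -
    have "meval N ?p z = (\<Prod>j<N. z j ^ d j)"
      by (subst meval_superset[of "{d}"]) auto
    also have "\<dots> = (\<Prod>j<N. if j = i then z j else 1)"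
      by (rule prod.cong) (auto simp: d_def)
    also have "\<dots> = z i" using PV by (subst prod.delta) auto
    finally show ?thesis .
  qed
  ultimately show ?case by auto
next
  case (PA a b)
  then obtain p q where p: "is_mpoly N C p" "\<forall>z. meval N p z = ev a z"
    and q: "is_mpoly N C q" "\<forall>z. meval N q z = ev b z" by auto
  let ?S = "{\<alpha>. p \<alpha> \<noteq> 0} \<union> {\<alpha>. q \<alpha> \<noteq> 0}"
  have fS: "finite ?S" using p q unfolding is_mpoly_def by auto
  have pC: "p \<alpha> \<in> C" "q \<alpha> \<in> C" for \<alpha>
    using p(1) q(1) subring_facts(1)[OF PA(3)] unfolding is_mpoly_def by (metis, metis)
  have pN: "p \<alpha> + q \<alpha> \<noteq> 0 \<Longrightarrow> i \<ge> N \<Longrightarrow> \<alpha> i = 0" for \<alpha> i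
    using p(1) q(1) unfolding is_mpoly_def by (metis add.left_neutral add.right_neutral)
  have "is_mpoly N C (\<lambda>\<alpha>. p \<alpha> + q \<alpha>)" using pC pN PA(3) unfolding is_mpoly_def
    by (auto intro: finite_subset[OF _ fS] subring_facts)
  moreover have "meval N (\<lambda>\<alpha>. p \<alpha> + q \<alpha>) z = ev (PA a b) z" for z
  proof -
    have "meval N (\<lambda>\<alpha>. p \<alpha> + q \<alpha>) z = (\<Sum>\<alpha>\<in>?S. (p \<alpha> + q \<alpha>) * (\<Prod>i<N. z i ^ \<alpha> i))"
      using fS by (intro meval_superset) auto
    also have "\<dots> = meval N p z + meval N q z"
      using fS by (simp add: distrib_right sum.distrib meval_superset[OF fS])
    finally show ?thesis using p q by simp
  qed
  ultimately show ?case by blast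
next
  case (PM a b)
  then obtain p q where p: "is_mpoly N C p" "\<forall>z. meval N p z = ev a z"
    and q: "is_mpoly N C q" "\<forall>z. meval N q z = ev b z" by auto
  define Sp where "Sp = {\<alpha>. p \<alpha> \<noteq> 0}"
  define Sq where "Sq = {\<alpha>. q \<alpha> \<noteq> 0}"
  have fin: "finite Sp" "finite Sq" using p q unfolding is_mpoly_def Sp_def Sq_def by auto
  define ad where "ad = (\<lambda>ab::(nat\<Rightarrow>nat)\<times>(nat\<Rightarrow>nat). (\<lambda>i. fst ab i + snd ab i))"
  define r where "r = (\<lambda>\<gamma>. \<Sum>ab\<in>{ab \<in> Sp \<times> Sq. ad ab = \<gamma>}. p (fst ab) * q (snd ab))"
  define T where "T = ad ` (Sp \<times> Sq)"
  have fT: "finite T" using fin unfolding T_def by auto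
  have suppr: "{\<gamma>. r \<gamma> \<noteq> 0} \<subseteq> T"
  proof
    fix \<gamma> assume "\<gamma> \<in> {\<gamma>. r \<gamma> \<noteq> 0}"
    then have "{ab \<in> Sp \<times> Sq. ad ab = \<gamma>} \<noteq> {}" unfolding r_def by force
    then show "\<gamma> \<in> T" unfolding T_def by auto
  qed
  have "is_mpoly N C r" unfolding is_mpoly_def
  proof (intro conjI)
    show "finite {\<gamma>. r \<gamma> \<noteq> 0}" using suppr fT finite_subset by blast
  next
    show "\<forall>\<gamma>. r \<gamma> \<noteq> 0 \<longrightarrow> (\<forall>i\<ge>N. \<gamma> i = 0) \<and> r \<gamma> \<in> C"
    proof (intro allI impI)
    fix \<gamma> assume "r \<gamma> \<noteq> 0"
    then have "{ab \<in> Sp \<times> Sq. ad ab = \<gamma>} \<noteq> {}" unfolding r_def by (metis sum.empty)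
    then obtain ab where ab: "ab \<in> Sp \<times> Sq" "ad ab = \<gamma>" by blast
    then have "\<forall>i\<ge>N. \<gamma> i = 0" using p(1) q(1) unfolding is_mpoly_def Sp_def Sq_def ad_def by auto
    moreover have "r \<gamma> \<in> C" unfolding r_def using p(1) q(1) PM(3) fin
      by (intro subring_sum) (auto simp: is_mpoly_def Sp_def Sq_def intro: subring_facts)
    ultimately show "(\<forall>i\<ge>N. \<gamma> i = 0) \<and> r \<gamma> \<in> C" by blast
  qed
  qed
  moreover have "meval N r z = ev (PM a b) z" for z
  proof -
    let ?mo = "\<lambda>\<alpha>. (\<Prod>i<N. z i ^ \<alpha> i)"
    have mo: "?mo (ad ab) = ?mo (fst ab) * ?mo (snd ab)" for ab
      unfolding ad_def by (simp add: power_add prod.distrib)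
    have "meval N r z = (\<Sum>\<gamma>\<in>T. r \<gamma> * ?mo \<gamma>)" by (rule meval_superset[OF fT suppr])
    also have "\<dots> = (\<Sum>\<gamma>\<in>T. \<Sum>ab\<in>{ab \<in> Sp \<times> Sq. ad ab = \<gamma>}. p (fst ab) * q (snd ab) * ?mo (ad ab))"
      unfolding r_def sum_distrib_right by (intro sum.cong refl) auto
    also have "\<dots> = (\<Sum>ab\<in>Sp \<times> Sq. p (fst ab) * q (snd ab) * ?mo (ad ab))"
      using fin fT unfolding T_def by (intro sum.group) auto
    also have "\<dots> = (\<Sum>ab\<in>Sp \<times> Sq. (p (fst ab) * ?mo (fst ab)) * (q (snd ab) * ?mo (snd ab)))"
      by (intro sum.cong refl) (simp add: mo mult_ac)
    also have "\<dots> = (\<Sum>\<alpha>\<in>Sp. p \<alpha> * ?mo \<alpha>) * (\<Sum>\<beta>\<in>Sq. q \<beta> * ?mo \<beta>)"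
      by (simp add: sum_product sum.cartesian_product case_prod_beta)
    also have "\<dots> = meval N p z * meval N q z" unfolding meval_def Sp_def Sq_def ..
    finally show ?thesis using p q by simp
  qed
  ultimately show ?case by blast
qed

lemma PF_mpoly: "subring_C C \<Longrightarrow> PF C N f \<Longrightarrow> \<exists>p. is_mpoly N C p \<and> (\<forall>z. meval N p z = f z)"
  unfolding PF_def using pok_mpoly by blast



lemma coeff_lin_mult: fixes a :: complex shows "coeff ([:a, 1:] * Q) k = a * coeff Q k + (if k = 0 then 0 else coeff Q (k - 1))"
  by (cases k) auto

lemma PF_lprod_coeff: "finite S \<Longrightarrow> subring_C C \<Longrightarrow> (\<forall>x\<in>S. PF C N (u x)) \<Longrightarrow>
   PF C N (\<lambda>z. coeff (\<Prod>x\<in>S. [:u x z, 1:]) k)"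
proof (induction S arbitrary: k rule: finite_induct)
  case empty
  then show ?case using PF_const[of 1 C N] PF_const[of 0 C N] subring_facts[of C]
    by (cases k) auto
next
  case (insert a S)
  show ?case
  proof (cases k)
    case 0
    then show ?thesis using insert PF_mult[of C N "u a" "\<lambda>z. coeff (\<Prod>x\<in>S. [:u x z, 1:]) 0"]
      by (simp add: coeff_lin_mult)
  next
    case (Suc k')
    then show ?thesis using insert PF_add[OF PF_mult[of C N "u a" "\<lambda>z. coeff (\<Prod>x\<in>S. [:u x z, 1:]) k"],
        of "\<lambda>z. coeff (\<Prod>x\<in>S. [:u x z, 1:]) k'"]
      by (simp add: coeff_lin_mult)
  qed
qed

lemma lprod_top: "finite S \<Longrightarrow> coeff (\<Prod>x\<in>S. [:u x, 1:]) (card S) = 1 \<and>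
   (\<forall>k>card S. coeff (\<Prod>x\<in>S. [:u x, 1:]) k = 0)"
proof (induction S rule: finite_induct)
  case empty then show ?case by (auto simp: coeff_1)
next
  case (insert a S)
  then show ?case by (auto simp add: coeff_lin_mult coeff_pCons split: nat.split)
qed

lemma lprod_degree: "finite S \<Longrightarrow> degree (\<Prod>x\<in>S. [:u x, 1:]) = card S"
  using lprod_top[of S u]
  by (metis (no_types, lifting) le_degree le_antisym degree_le zero_neq_one not_le)

lemma PF_esym: "subring_C C \<Longrightarrow> (\<forall>j<n. PF C N (\<lambda>z. x z j)) \<Longrightarrow> PF C N (\<lambda>z. esym n (x z) r)"
  unfolding esym_def by (rule PF_lprod_coeff) auto

lemma esym_permute: "p permutes {..<n} \<Longrightarrow> esym n (x \<circ> p) r = esym n x r"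
  unfolding esym_def using prod.permute[of p "{..<n}" "\<lambda>i. [:x i, 1:]"] by (simp add: comp_def)

lemma esym_0: "esym n x 0 = 1"
  unfolding esym_def using lprod_top[of "{..<n}" x] by simp

lemma esym_shift:
  fixes x :: "nat \<Rightarrow> complex"
  shows "r \<le> n \<Longrightarrow> esym n (\<lambda>j. x (Suc j)) r = (\<Sum>l\<le>r. (- x 0)^l * esym (Suc n) x (r - l))"
proof (induction r)
  case 0
  then show ?case by (simp add: esym_0)
next
  case (Suc r)
  let ?Q = "\<Prod>j<n. [:x (Suc j), 1:]"
  have P: "(\<Prod>j<Suc n. [:x j, 1:]) = [:x 0, 1:] * ?Q" by (simp only: prod.lessThan_Suc_shift)
  have "esym (Suc n) x (Suc r) = coeff ([:x 0, 1:] * ?Q) (Suc n - Suc r)" unfolding esym_def P ..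
  also have "\<dots> = x 0 * coeff ?Q (n - r) + coeff ?Q (n - Suc r)"
    using Suc.prems by (simp del: mult_pCons_left add: coeff_lin_mult Suc_diff_Suc)
  finally have e: "esym n (\<lambda>j. x (Suc j)) (Suc r) = esym (Suc n) x (Suc r) - x 0 * esym n (\<lambda>j. x (Suc j)) r"
    unfolding esym_def by simp
  have "(\<Sum>l\<le>Suc r. (- x 0)^l * esym (Suc n) x (Suc r - l)) =
     esym (Suc n) x (Suc r) + (\<Sum>l\<le>r. (- x 0)^(Suc l) * esym (Suc n) x (r - l))"
    by (subst sum.atMost_Suc_shift) simp
  also have "\<dots> = esym (Suc n) x (Suc r) - x 0 * (\<Sum>l\<le>r. (- x 0)^l * esym (Suc n) x (r - l))"
    by (simp add: sum_distrib_left mult_ac sum_negf)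
  finally show ?case using e Suc by simp
qed

lemma esym_relation:
  fixes x :: "nat \<Rightarrow> complex"
  shows "x 0 ^ Suc n = (\<Sum>k\<le>n. (-1)^(n+k) * esym (Suc n) x (Suc n - k) * x 0 ^ k)"
proof -
  define P where "P = (\<Prod>j<Suc n. [:x j, 1:])"
  have deg: "degree P = Suc n" using lprod_degree[of "{..<Suc n}" x] unfolding P_def by simp
  have top: "coeff P (Suc n) = 1" using lprod_top[of "{..<Suc n}" x] unfolding P_def by simp
  have "poly P (- x 0) = 0" unfolding P_def by (simp only: prod.lessThan_Suc_shift poly_mult) simp
  then have "(\<Sum>k\<le>Suc n. coeff P k * (- x 0)^k) = 0" by (simp add: poly_altdef deg)
  then have "(- x 0)^Suc n = - (\<Sum>k\<le>n. coeff P k * (- x 0)^k)"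
    using top by (simp add: add_eq_0_iff)
  then have "(-1)^Suc n * (- x 0)^Suc n = (-1)^Suc n * - (\<Sum>k\<le>n. coeff P k * (- x 0)^k)" by simp
  moreover have "(-1)^Suc n * (- x 0)^Suc n = x 0 ^ Suc n" by (simp flip: power_mult_distrib)
  moreover have "(-1)^Suc n * - (\<Sum>k\<le>n. coeff P k * (- x 0)^k) = (-1)^n * (\<Sum>k\<le>n. coeff P k * (- x 0)^k)"
    by simp
  moreover have "\<dots> = (\<Sum>k\<le>n. (-1)^(n+k) * coeff P k * x 0 ^ k)"
    unfolding sum_distrib_left by (intro sum.cong refl) (simp add: power_add power_minus[of "x 0"] mult_ac)
  ultimately have "x 0 ^ Suc n = (\<Sum>k\<le>n. (-1)^(n+k) * coeff P k * x 0 ^ k)" by simp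
  also have "\<dots> = (\<Sum>k\<le>n. (-1)^(n+k) * esym (Suc n) x (Suc n - k) * x 0 ^ k)"
    unfolding esym_def P_def by (intro sum.cong refl) (simp add: Suc_diff_le)
  finally show ?thesis .
qed

lemma lprod_coeff_bound:
  fixes u :: "'a \<Rightarrow> complex"
  shows "finite S \<Longrightarrow> s \<ge> 0 \<Longrightarrow> (\<forall>x\<in>S. cmod (u x) \<le> s) \<Longrightarrow>
    cmod (coeff (\<Prod>x\<in>S. [:u x, 1:]) k) \<le> (if k \<le> card S then 2^card S * s^(card S - k) else 0)"
proof (induction S arbitrary: k rule: finite_induct)
  case empty then show ?case by (auto simp: coeff_1)
next
  case (insert a S)
  let ?Q = "\<Prod>x\<in>S. [:u x, 1:]"
  let ?c = "card S"
  have ua: "cmod (u a) \<le> s" using insert by auto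
  have IH: "cmod (coeff ?Q j) \<le> (if j \<le> ?c then 2^?c * s^(?c - j) else 0)" for j
    using insert by auto
  have eq: "coeff (\<Prod>x\<in>insert a S. [:u x, 1:]) k = u a * coeff ?Q k + (if k = 0 then 0 else coeff ?Q (k - 1))"
    using insert by (simp del: mult_pCons_left add: coeff_lin_mult)
  have cs: "card (insert a S) = Suc ?c" using insert by simp
  show ?case
  proof (cases k)
    case 0
    have "cmod (u a * coeff ?Q 0) \<le> s * (2^?c * s^?c)"
      unfolding norm_mult using IH[of 0] ua insert.prems by (intro mult_mono) auto
    also have "\<dots> \<le> 2^Suc ?c * s^Suc ?c" using insert.prems by (simp add: mult_left_mono)
    finally show ?thesis using eq 0 cs by simp
  next
    case (Suc k')
    have n1: "cmod (coeff (\<Prod>x\<in>insert a S. [:u x, 1:]) k) \<le> s * cmod (coeff ?Q k) + cmod (coeff ?Q k')"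
    proof -
      have "cmod (u a) * cmod (coeff ?Q k) \<le> s * cmod (coeff ?Q k)" using ua by (rule mult_right_mono) simp
      then show ?thesis
      unfolding eq using Suc norm_triangle_ineq[of "u a * coeff ?Q k" "coeff ?Q k'"]
      by (auto simp: norm_mult)
    qed
    consider "k' < ?c" | "k' = ?c" | "k' > ?c" by linarith
    then show ?thesis
    proof cases
      case 1
      have q': "cmod (coeff ?Q k') \<le> 2^?c * s^(?c - k')" using IH[of k'] 1 by simp
      have "s * cmod (coeff ?Q k) \<le> s * (2^?c * s^(?c - k))"
        using IH[of k] Suc 1 insert.prems by (intro mult_left_mono) auto
      also have "\<dots> = 2^?c * s^(?c - k')" using Suc 1
        by (simp add: mult_ac) (metis Suc_diff_Suc power_Suc)
      finally have "cmod (coeff (\<Prod>x\<in>insert a S. [:u x, 1:]) k) \<le> 2^?c * s^(?c - k') + 2^?c * s^(?c - k')"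
        using n1 q' by linarith
      then show ?thesis using cs Suc 1 by (simp add: mult_ac)
    next
      case 2
      have "cmod (coeff ?Q k) = 0" using IH[of k] Suc 2 by simp
      moreover have "cmod (coeff ?Q k') \<le> 2^?c" using IH[of k'] 2 by simp
      ultimately have X: "cmod (coeff (\<Prod>x\<in>insert a S. [:u x, 1:]) k) \<le> 2^?c" using n1 by simp
      show ?thesis using order_trans[OF X, of "2*2^?c"] 2 cs Suc by simp
    next
      case 3
      have "cmod (coeff ?Q k) = 0" "cmod (coeff ?Q k') = 0" using IH[of k] IH[of k'] Suc 3 by auto
      then show ?thesis using n1 3 cs Suc by simp
    qed
  qed
qed

lemma half_sum: "(\<Sum>k<N. (1/2::real)^(N-k)) = 1 - (1/2)^N"
proof (induction N)
  case 0 then show ?case by simp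
next
  case (Suc N)
  have "(\<Sum>k<Suc N. (1/2::real)^(Suc N-k)) = (\<Sum>k<N. (1/2)*(1/2::real)^(N-k)) + 1/2"
    by (simp add: Suc_diff_le)
  also have "\<dots> = (1/2) * (\<Sum>k<N. (1/2::real)^(N-k)) + 1/2" by (simp add: sum_distrib_left)
  also have "\<dots> = (1/2) * (1 - (1/2)^N) + 1/2" by (simp only: Suc)
  finally show ?case by simp
qed

lemma root_bound:
  fixes c :: "nat \<Rightarrow> complex"
  assumes z: "(\<Sum>k\<le>N. c k * t^k) = 0" and top: "c N = 1"
    and bd: "\<forall>k<N. cmod (c k) \<le> B^(N-k)" and B: "B \<ge> 0"
  shows "cmod t \<le> 2*B"
proof (rule ccontr)
  assume "\<not> cmod t \<le> 2*B"
  then have tb: "cmod t > 2*B" by simp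
  then have tp: "cmod t > 0" using B by linarith
  have "t^N = - (\<Sum>k<N. c k * t^k)" using z top by (simp add: lessThan_Suc_atMost[symmetric] add_eq_0_iff)
  then have "cmod t ^ N = cmod (\<Sum>k<N. c k * t^k)" by (metis norm_minus_cancel norm_power)
  also have "\<dots> \<le> (\<Sum>k<N. cmod (c k) * cmod t^k)" by (rule order_trans[OF norm_sum]) (simp add: norm_mult norm_power)
  also have "\<dots> \<le> (\<Sum>k<N. (cmod t / 2)^(N-k) * cmod t^k)"
  proof (intro sum_mono mult_right_mono)
    fix k assume "k \<in> {..<N}"
    then have "cmod (c k) \<le> B^(N-k)" using bd by auto
    also have "\<dots> \<le> (cmod t / 2)^(N-k)" using B tb by (intro power_mono) auto
    finally show "cmod (c k) \<le> (cmod t / 2)^(N-k)" .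
  qed simp
  also have "\<dots> = (\<Sum>k<N. cmod t ^ N * (1/2)^(N-k))"
  proof (intro sum.cong refl)
    fix k assume "k \<in> {..<N}"
    then have "cmod t ^ N = cmod t ^ (N-k) * cmod t ^ k" by (simp flip: power_add)
    then show "(cmod t / 2)^(N-k) * cmod t^k = cmod t ^ N * (1/2)^(N-k)"
      by (simp add: power_divide)
  qed
  also have "\<dots> = cmod t ^ N * (1 - (1/2)^N)" by (simp add: half_sum flip: sum_distrib_left)
  also have "\<dots> < cmod t ^ N" using tp by (simp add: algebra_simps)
  finally show False by simp
qed



definition Gp :: "complex set \<Rightarrow> nat \<Rightarrow> nat \<Rightarrow> ((nat \<Rightarrow> complex) \<Rightarrow> complex) \<Rightarrow> bool" where
  "Gp C m n h \<longleftrightarrow> (\<exists>d. (\<forall>k\<le>n. PF C (m + Suc n) (d k)) \<and>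
     (\<forall>z. h z = (\<Sum>k\<le>n. d k (symvars m (Suc n) z) * z m ^ k)))"

lemma sum_atMost_shift0: "(\<Sum>k\<le>n. f k) = f 0 + (\<Sum>k<n. f (Suc k))"
proof (cases n)
  case 0 then show ?thesis by simp
next
  case (Suc n') then show ?thesis by (simp only: sum.atMost_Suc_shift lessThan_Suc_atMost)
qed

lemma G_lift:
  assumes "subring_C C" "PF C (m + Suc n) e"
  shows "Gp C m n (\<lambda>z. e (symvars m (Suc n) z))"
  unfolding Gp_def
proof (intro exI conjI allI impI)
  let ?d = "\<lambda>k w. if k = 0 then e w else 0"
  show "PF C (m + Suc n) (?d k)" if "k \<le> n" for k
    using assms PF_const[of 0 C] subring_facts[OF assms(1)] by (cases "k = 0") auto
  show "e (symvars m (Suc n) z) = (\<Sum>k\<le>n. ?d k (symvars m (Suc n) z) * z m ^ k)" for z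
    by (subst sum_atMost_shift0) simp
qed

lemma G_const: "subring_C C \<Longrightarrow> c \<in> C \<Longrightarrow> Gp C m n (\<lambda>z. c)"
  using G_lift[of C m n "\<lambda>w. c"] PF_const by simp

lemma G_ext: "Gp C m n h \<Longrightarrow> (\<And>z. h z = g z) \<Longrightarrow> Gp C m n g"
  unfolding Gp_def by metis

lemma G_add:
  assumes "Gp C m n h" "Gp C m n g"
  shows "Gp C m n (\<lambda>z. h z + g z)"
proof -
  obtain d where d: "\<forall>k\<le>n. PF C (m + Suc n) (d k)" "\<forall>z. h z = (\<Sum>k\<le>n. d k (symvars m (Suc n) z) * z m ^ k)"
    using assms(1) unfolding Gp_def by blast
  obtain d' where d': "\<forall>k\<le>n. PF C (m + Suc n) (d' k)" "\<forall>z. g z = (\<Sum>k\<le>n. d' k (symvars m (Suc n) z) * z m ^ k)"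
    using assms(2) unfolding Gp_def by blast
  show ?thesis unfolding Gp_def
    by (rule exI[of _ "\<lambda>k w. d k w + d' k w"])
      (use d d' in \<open>auto intro: PF_add simp: distrib_right sum.distrib\<close>)
qed

lemma G_scale:
  assumes "PF C (m + Suc n) e" "Gp C m n h"
  shows "Gp C m n (\<lambda>z. e (symvars m (Suc n) z) * h z)"
proof -
  obtain d where d: "\<forall>k\<le>n. PF C (m + Suc n) (d k)" "\<forall>z. h z = (\<Sum>k\<le>n. d k (symvars m (Suc n) z) * z m ^ k)"
    using assms(2) unfolding Gp_def by blast
  show ?thesis unfolding Gp_def
    by (rule exI[of _ "\<lambda>k w. e w * d k w"])
      (use d assms(1) in \<open>auto intro: PF_mult simp: sum_distrib_left mult_ac\<close>)
qed

lemma symvars_esym: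
  "k \<le> n \<Longrightarrow> symvars m (Suc n) z (m + n - k) = esym (Suc n) (\<lambda>j. z (m + j)) (Suc n - k)"
proof -
  assume k: "k \<le> n"
  have "\<not> m + n - k < m" "m + n - k < m + Suc n" "m + n - k - m + 1 = Suc n - k" using k by arith+
  then show ?thesis unfolding symvars_def by simp
qed

lemma G_X:
  assumes C: "subring_C C" and h: "Gp C m n h"
  shows "Gp C m n (\<lambda>z. z m * h z)"
proof -
  obtain d where d: "\<forall>k\<le>n. PF C (m + Suc n) (d k)" "\<forall>z. h z = (\<Sum>k\<le>n. d k (symvars m (Suc n) z) * z m ^ k)"
    using h unfolding Gp_def by blast
  define r where "r = (\<lambda>k (w::nat \<Rightarrow> complex). (-1)^(n+k) * w (m + n - k))"
  have rel: "z m ^ Suc n = (\<Sum>k\<le>n. r k (symvars m (Suc n) z) * z m ^ k)" for z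
  proof -
    have "z m ^ Suc n = (\<Sum>k\<le>n. (-1)^(n+k) * esym (Suc n) (\<lambda>j. z (m + j)) (Suc n - k) * z m ^ k)"
      using esym_relation[of "\<lambda>j. z (m + j)" n] by simp
    also have "\<dots> = (\<Sum>k\<le>n. r k (symvars m (Suc n) z) * z m ^ k)"
      unfolding r_def by (intro sum.cong refl) (simp add: symvars_esym)
    finally show ?thesis .
  qed
  have rPF: "PF C (m + Suc n) (r k)" if "k \<le> n" for k
    unfolding r_def using that
    by (intro PF_mult PF_power PF_const PF_var subring_facts[OF C] C) auto
  define d' where "d' = (\<lambda>k w. (if k = 0 then 0 else d (k - 1) w) + d n w * r k w)"
  show ?thesis unfolding Gp_def
  proof (intro exI[of _ d'] conjI allI impI)
    fix k assume k: "k \<le> n"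
    show "PF C (m + Suc n) (d' k)"
      unfolding d'_def using k d(1) rPF[OF k] PF_const[of 0 C] subring_facts[OF C]
      by (cases "k = 0") (auto intro!: PF_add PF_mult)
  next
    fix z
    let ?s = "symvars m (Suc n) z"
    have "z m * h z = (\<Sum>k\<le>n. d k ?s * z m ^ Suc k)"
      using d(2) by (simp add: sum_distrib_left mult_ac)
    also have "\<dots> = (\<Sum>k<n. d k ?s * z m ^ Suc k) + d n ?s * z m ^ Suc n"
      by (simp add: lessThan_Suc_atMost[symmetric])
    also have "(\<Sum>k<n. d k ?s * z m ^ Suc k) = (\<Sum>k\<le>n. (if k = 0 then 0 else d (k - 1) ?s) * z m ^ k)"
      by (subst sum_atMost_shift0) simp
    also have "d n ?s * z m ^ Suc n = (\<Sum>k\<le>n. d n ?s * r k ?s * z m ^ k)"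
      unfolding rel by (simp add: sum_distrib_left mult_ac)
    finally show "z m * h z = (\<Sum>k\<le>n. d' k ?s * z m ^ k)"
      unfolding d'_def by (simp add: distrib_right sum.distrib)
  qed
qed

lemma G_sum: "finite S \<Longrightarrow> subring_C C \<Longrightarrow> (\<forall>x\<in>S. Gp C m n (f x)) \<Longrightarrow> Gp C m n (\<lambda>z. \<Sum>x\<in>S. f x z)"
proof (induction S rule: finite_induct)
  case empty then show ?case using G_const[of C 0] subring_facts by simp
next
  case (insert a S) then show ?case using G_add[of C m n "f a" "\<lambda>z. \<Sum>x\<in>S. f x z"] by simp
qed

lemma G_Xpow: "subring_C C \<Longrightarrow> Gp C m n h \<Longrightarrow> Gp C m n (\<lambda>z. z m ^ j * h z)"
proof (induction j)
  case 0 then show ?case by simp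
next
  case (Suc j)
  then show ?case using G_X[of C m n "\<lambda>z. z m ^ j * h z"] by (simp add: mult_ac)
qed

lemma G_mult:
  assumes C: "subring_C C" and h: "Gp C m n h" and g: "Gp C m n g"
  shows "Gp C m n (\<lambda>z. h z * g z)"
proof -
  obtain d where d: "\<forall>k\<le>n. PF C (m + Suc n) (d k)" "\<forall>z. h z = (\<Sum>k\<le>n. d k (symvars m (Suc n) z) * z m ^ k)"
    using h unfolding Gp_def by blast
  have "Gp C m n (\<lambda>z. \<Sum>k\<le>n. d k (symvars m (Suc n) z) * (z m ^ k * g z))"
    using d(1) by (intro G_sum C ballI G_scale G_Xpow g) auto
  then show ?thesis
    by (rule G_ext) (simp only: d(2) sum_distrib_right mult.assoc)
qed

lemma G_pow: "subring_C C \<Longrightarrow> Gp C m n h \<Longrightarrow> Gp C m n (\<lambda>z. h z ^ j)"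
proof (induction j)
  case 0 then show ?case using G_const[of C 1] subring_facts by simp
next
  case (Suc j) then show ?case using G_mult[of C m n h "\<lambda>z. h z ^ j"] by simp
qed



lemma transpose_shift: "Transposition.transpose (m+a) (m+b) (m+j) = m + Transposition.transpose a b (j::nat)"
  by (simp add: Transposition.transpose_def)

lemma transpose_low: "i < m \<Longrightarrow> Transposition.transpose (m+a) (m+b) i = (i::nat)"
  by (simp add: Transposition.transpose_def)

lemma symvars_swap:
  assumes "a < n" "b < n"
  shows "symvars m n (z \<circ> Transposition.transpose (m+a) (m+b)) = symvars m n z"
proof (rule ext)
  fix i
  have e: "(\<lambda>j. (z \<circ> Transposition.transpose (m+a) (m+b)) (m+j)) = (\<lambda>j. z (m+j)) \<circ> Transposition.transpose a b"
    by (auto simp: transpose_shift)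
  have p: "esym n ((\<lambda>j. z (m+j)) \<circ> Transposition.transpose a b) r = esym n (\<lambda>j. z (m+j)) r" for r
    using esym_permute permutes_swap_id assms by (metis lessThan_iff)
  show "symvars m n (z \<circ> Transposition.transpose (m+a) (m+b)) i = symvars m n z i"
    unfolding symvars_def using e p by (simp add: transpose_low)
qed

lemma PF_symvars:
  assumes C: "subring_C C" and i: "i < m + n"
  shows "PF C (m + n) (\<lambda>z. symvars m n z i)"
proof (cases "i < m")
  case True
  then show ?thesis unfolding symvars_def using PF_var[of i "m+n" C] by simp
next
  case False
  have "PF C (m + n) (\<lambda>z. esym n (\<lambda>j. z (m + j)) (i - m + 1))"
    by (rule PF_esym[OF C]) (auto intro: PF_var)
  then show ?thesis unfolding symvars_def using False i by simp
qed

lemma G_esym: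
  assumes C: "subring_C C" and s: "s \<le> Suc n"
  shows "Gp C m n (\<lambda>z. esym (Suc n) (\<lambda>j. z (m + j)) s)"
proof (cases "s = 0")
  case True
  then show ?thesis using G_const[OF C, of 1 m n] subring_facts[OF C] by (simp add: esym_0)
next
  case False
  have "PF C (m + Suc n) (\<lambda>w. w (m + s - 1))" using s False by (intro PF_var) auto
  moreover have "\<not> m + s - 1 < m" "m + s - 1 < m + Suc n" "m + s - 1 - m + 1 = s" using s False by arith+
  ultimately show ?thesis using G_lift[OF C, where e="\<lambda>w. w (m + s - 1)" and m=m and n=n]
    by (simp add: symvars_def)
qed

lemma G_IH:
  assumes C: "subring_C C"
  shows "pok C (Suc m + n) e \<Longrightarrow> Gp C m n (\<lambda>z. ev e (symvars (Suc m) n z))"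
proof (induction e)
  case (PC c) then show ?case using G_const[OF C] by simp
next
  case (PA a b) then show ?case using G_add by simp
next
  case (PM a b) then show ?case using G_mult[OF C] by simp
next
  case (PV i)
  then have i: "i < Suc m + n" by simp
  have GX: "Gp C m n (\<lambda>z. z m * c)" if "c \<in> C" for c
    using G_X[OF C G_const[OF C that]] .
  consider "i < m" | "i = m" | "m < i" by linarith
  then show ?case
  proof cases
    case 1
    have "PF C (m + Suc n) (\<lambda>w. w i)" using 1 by (intro PF_var) auto
    from G_lift[OF C this] show ?thesis
      by (rule G_ext) (use 1 in \<open>simp add: symvars_def\<close>)
  next
    case 2
    from GX[OF subring_facts(2)[OF C]] show ?thesis
      by (rule G_ext) (use 2 in \<open>simp add: symvars_def\<close>)
  next
    case 3
    define r where "r = i - m"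
    have r: "1 \<le> r" "r \<le> n" using 3 i unfolding r_def by auto
    have eq: "symvars (Suc m) n z i =
      (\<Sum>l\<le>r. (- z m)^l * esym (Suc n) (\<lambda>j. z (m + j)) (r - l))" for z
    proof -
      have "symvars (Suc m) n z i = esym n (\<lambda>j. z (Suc m + j)) r"
      proof -
        have "Suc (i - Suc m) = i - m" "\<not> i < Suc m" "i < Suc m + n" using 3 i by arith+
        then show ?thesis unfolding symvars_def r_def by simp
      qed
      also have "\<dots> = esym n (\<lambda>j. (\<lambda>j. z (m + j)) (Suc j)) r" by simp
      also have "\<dots> = (\<Sum>l\<le>r. (- z m)^l * esym (Suc n) (\<lambda>j. z (m + j)) (r - l))"
        using esym_shift[OF r(2), of "\<lambda>j. z (m + j)"] by simp
      finally show ?thesis .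
    qed
    have Gneg: "Gp C m n (\<lambda>z. - z m)"
      using GX[OF subring_facts(3)[OF C]] by (rule G_ext) simp
    have "Gp C m n (\<lambda>z. \<Sum>l\<le>r. (- z m)^l * esym (Suc n) (\<lambda>j. z (m + j)) (r - l))"
      using r by (intro G_sum C ballI G_mult G_pow Gneg G_esym) auto
    then show ?thesis by (rule G_ext) (simp add: eq)
  qed
qed

lemma sym_thm:
  "subring_C C \<Longrightarrow> PF C (m + n) \<phi> \<Longrightarrow>
   (\<forall>a b z. a < n \<longrightarrow> b < n \<longrightarrow> \<phi> (z \<circ> Transposition.transpose (m+a) (m+b)) = \<phi> z) \<Longrightarrow>
   \<exists>\<psi>. PF C (m + n) \<psi> \<and> (\<forall>z. \<phi> z = \<psi> (symvars m n z))"
proof (induction n arbitrary: m \<phi>)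
  case 0
  have "\<phi> z = \<phi> (symvars m 0 z)" for z
    using PF_dep[OF 0(2)] by (simp add: symvars_def)
  then show ?case using 0 by auto
next
  case (Suc n)
  note C = Suc.prems(1)
  have "\<exists>\<psi>. PF C (Suc m + n) \<psi> \<and> (\<forall>z. \<phi> z = \<psi> (symvars (Suc m) n z))"
  proof (rule Suc.IH[OF C])
    show "PF C (Suc m + n) \<phi>" using Suc.prems(2) by simp
    show "\<forall>a b z. a < n \<longrightarrow> b < n \<longrightarrow> \<phi> (z \<circ> Transposition.transpose (Suc m + a) (Suc m + b)) = \<phi> z"
    proof (intro allI impI)
      fix a b z assume "a < n" "b < n"
      then show "\<phi> (z \<circ> Transposition.transpose (Suc m + a) (Suc m + b)) = \<phi> z"
        using Suc.prems(3)[rule_format, of "Suc a" "Suc b" z] by simp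
    qed
  qed
  then obtain e where e: "pok C (Suc m + n) e" "\<forall>z. \<phi> z = ev e (symvars (Suc m) n z)"
    unfolding PF_def by auto
  have "Gp C m n \<phi>" using G_IH[OF C e(1)] by (rule G_ext) (simp add: e(2))
  then obtain d where d: "\<forall>k\<le>n. PF C (m + Suc n) (d k)"
      "\<forall>z. \<phi> z = (\<Sum>k\<le>n. d k (symvars m (Suc n) z) * z m ^ k)"
    unfolding Gp_def by blast
  define sy where "sy = symvars m (Suc n)"
  have symq: "\<phi> z = (\<Sum>k\<le>n. d k (sy z) * z (m + i) ^ k)" if "i \<le> n" for z i
  proof -
    let ?T = "Transposition.transpose m (m + i)"
    have "\<phi> z = \<phi> (z \<circ> ?T)"
      using Suc.prems(3)[rule_format, of 0 i z] that by simp
    also have "\<dots> = (\<Sum>k\<le>n. d k (sy (z \<circ> ?T)) * (z \<circ> ?T) m ^ k)"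
      using d(2) unfolding sy_def by blast
    also have "sy (z \<circ> ?T) = sy z" using symvars_swap[of 0 "Suc n" i m z] that unfolding sy_def by simp
    also have "(z \<circ> ?T) m = z (m + i)" by simp
    finally show ?thesis .
  qed
  have dist: "\<phi> z = d 0 (sy z)" if inj: "inj_on (\<lambda>i. z (m + i)) {..n}" for z
  proof -
    define c where "c = (\<lambda>k. if k = 0 then d 0 (sy z) - \<phi> z else d k (sy z))"
    define q where "q = (\<Sum>k\<le>n. monom (c k) k)"
    have pq: "poly q t = (\<Sum>k\<le>n. d k (sy z) * t ^ k) - \<phi> z" for t
    proof -
      have "poly q t = (\<Sum>k\<le>n. c k * t ^ k)" unfolding q_def by (simp add: poly_sum poly_monom)
      also have "\<dots> = c 0 + (\<Sum>k<n. c (Suc k) * t ^ Suc k)" by (subst sum_atMost_shift0) simp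
      also have "\<dots> = (d 0 (sy z) + (\<Sum>k<n. d (Suc k) (sy z) * t ^ Suc k)) - \<phi> z" by (simp add: c_def)
      also have "d 0 (sy z) + (\<Sum>k<n. d (Suc k) (sy z) * t ^ Suc k) = (\<Sum>k\<le>n. d k (sy z) * t ^ k)"
        using sum_atMost_shift0[of "\<lambda>k. d k (sy z) * t ^ k" n] by simp
      finally show ?thesis .
    qed
    have cq: "coeff q k = (if k \<le> n then c k else 0)" for k
      unfolding q_def coeff_sum by (simp add: coeff_monom)
    have dq: "degree q \<le> n" by (rule degree_le) (simp add: cq)
    have "q = 0"
    proof (rule ccontr)
      assume q0: "q \<noteq> 0"
      have sub: "(\<lambda>i. z (m + i)) ` {..n} \<subseteq> {x. poly q x = 0}"
        using symq by (auto simp: pq)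
      have "Suc n = card ((\<lambda>i. z (m + i)) ` {..n})" using card_image[OF inj] by simp
      also have "\<dots> \<le> card {x. poly q x = 0}" by (rule card_mono[OF poly_roots_finite[OF q0] sub])
      also have "\<dots> \<le> degree q" by (rule card_poly_roots_bound[OF q0])
      finally show False using dq by simp
    qed
    then have "c 0 = 0" using cq[of 0] by simp
    then show ?thesis unfolding c_def by simp
  qed
  have "\<forall>i<m + Suc n. PF C (m + Suc n) (\<lambda>z. symvars m (Suc n) z i)" using PF_symvars[OF C] by blast
  from PF_subst[OF _ this, of "d 0"] d(1)
  have PFsy: "PF C (m + Suc n) (\<lambda>z. d 0 (sy z))" by (simp add: sy_def)
  have all: "\<phi> z = d 0 (sy z)" for z
  proof -
    define w where "w = (\<lambda>i. if m \<le> i \<and> i \<le> m + n then of_nat (i - m) else (0::complex))"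
    define zt where "zt = (\<lambda>t i. z i + t * w i)"
    define B where "B = (\<lambda>(a, b). (z (m + a) - z (m + b)) / (of_nat b - of_nat a)) ` ({..n} \<times> {..n})"
    have fB: "finite B" unfolding B_def by auto
    have c1: "continuous_on UNIV (\<lambda>t. \<phi> (zt t))" unfolding zt_def by (rule PF_cont[OF Suc.prems(2)])
    have c2: "continuous_on UNIV (\<lambda>t. d 0 (sy (zt t)))" unfolding zt_def by (rule PF_cont[OF PFsy])
    have agree: "\<phi> (zt t) = d 0 (sy (zt t))" if "t \<notin> B" for t
    proof (rule dist)
      show "inj_on (\<lambda>i. zt t (m + i)) {..n}"
      proof (rule inj_onI)
        fix a b assume a: "a \<in> {..n}" and b: "b \<in> {..n}" and eq: "zt t (m + a) = zt t (m + b)"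
        show "a = b"
        proof (rule ccontr)
          assume ab: "a \<noteq> b"
          have ne: "(of_nat b - of_nat a :: complex) \<noteq> 0" using ab by simp
          have "z (m + a) + t * of_nat a = z (m + b) + t * of_nat b"
            using eq a b unfolding zt_def w_def by simp
          then have "t * (of_nat b - of_nat a) = z (m + a) - z (m + b)" by (simp add: algebra_simps)
          then have "t = (z (m + a) - z (m + b)) / (of_nat b - of_nat a)" using ne by (simp add: field_simps)
          then have "t \<in> B" unfolding B_def using a b by (intro image_eqI[where x="(a,b)"]) auto
          then show False using that by simp
        qed
      qed
    qed
    have "open {t. \<phi> (zt t) \<noteq> d 0 (sy (zt t))}" by (rule open_Collect_neq[OF c1 c2])
    moreover have "{t. \<phi> (zt t) \<noteq> d 0 (sy (zt t))} \<subseteq> B" using agree by auto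
    moreover have "finite {t. \<phi> (zt t) \<noteq> d 0 (sy (zt t))}"
      using finite_subset fB calculation(2) by blast
    ultimately have "{t. \<phi> (zt t) \<noteq> d 0 (sy (zt t))} = {}"
      using finite_imp_not_open by blast
    then have "\<phi> (zt 0) = d 0 (sy (zt 0))" by auto
    moreover have "zt 0 = z" unfolding zt_def by simp
    ultimately show ?thesis by simp
  qed
  show ?case by (rule exI[of _ "d 0"]) (use all d(1) in \<open>simp add: sy_def\<close>)
qed



definition Sf :: "nat \<Rightarrow> mpoly list \<Rightarrow> (nat \<Rightarrow> complex) \<Rightarrow> real" where
  "Sf N ps z = (\<Sum>p\<leftarrow>ps. (cmod (meval N p z))\<^sup>2)"

lemma permvars_id: "permvars m n id z = z"
  unfolding permvars_def by (rule ext) simp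

lemma permvars_comp:
  assumes "\<pi> permutes {..<n}"
  shows "permvars m n \<pi> (permvars m n \<tau> z) = permvars m n (\<tau> \<circ> \<pi>) z"
proof (rule ext)
  fix i
  show "permvars m n \<pi> (permvars m n \<tau> z) i = permvars m n (\<tau> \<circ> \<pi>) z i"
  proof (cases "m \<le> i \<and> i < m + n")
    case True
    then have "\<pi> (i - m) \<in> {..<n}" by (intro permutes_in_image[OF assms, THEN iffD2]) auto
    then have h: "\<pi> (i - m) < n" by simp
    let ?j = "m + \<pi> (i - m)"
    have a: "\<not> i < m" "i < m + n" "\<not> ?j < m" "?j < m + n" "?j - m = \<pi> (i - m)" using True h by auto
    have "permvars m n \<pi> (permvars m n \<tau> z) i = permvars m n \<tau> z ?j"
      unfolding permvars_def[of m n \<pi>] using a(1,2) by simp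
    also have "\<dots> = z (m + \<tau> (\<pi> (i - m)))" unfolding permvars_def using a(3,4,5) by simp
    also have "\<dots> = permvars m n (\<tau> \<circ> \<pi>) z i" unfolding permvars_def using a(1,2) by simp
    finally show ?thesis .
  next
    case False
    then have "i < m \<or> \<not> i < m + n" by auto
    then show ?thesis unfolding permvars_def by (elim disjE) simp_all
  qed
qed

lemma swap_permvars:
  assumes "a < n" "b < n"
  shows "z \<circ> Transposition.transpose (m+a) (m+b) = permvars m n (Transposition.transpose a b) z"
proof (rule ext)
  fix i
  show "(z \<circ> Transposition.transpose (m+a) (m+b)) i = permvars m n (Transposition.transpose a b) z i"
  proof (cases "m \<le> i \<and> i < m + n")
    case True
    then have "i = m + (i - m)" by simp
    then have "Transposition.transpose (m+a) (m+b) i = m + Transposition.transpose a b (i - m)"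
      by (metis transpose_shift)
    then show ?thesis using True unfolding permvars_def by simp
  next
    case False
    then have "Transposition.transpose (m+a) (m+b) i = i" using assms
      by (intro transpose_apply_other) auto
    then show ?thesis using False unfolding permvars_def by auto
  qed
qed

lemma PF_permvars:
  assumes C: "subring_C C" and p: "\<pi> permutes {..<n}" and f: "PF C (m + n) f"
  shows "PF C (m + n) (\<lambda>z. f (permvars m n \<pi> z))"
proof (rule PF_subst[OF f], intro allI impI)
  fix i assume i: "i < m + n"
  show "PF C (m + n) (\<lambda>z. permvars m n \<pi> z i)"
  proof (cases "i < m")
    case True then show ?thesis unfolding permvars_def using PF_var[of i "m+n" C] by simp
  next
    case False
    then have "\<pi> (i - m) \<in> {..<n}" using i by (intro permutes_in_image[OF p, THEN iffD2]) auto
    then have "\<pi> (i - m) < n" by simp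
    then have "PF C (m + n) (\<lambda>z. z (m + \<pi> (i - m)))" by (intro PF_var) auto
    then show ?thesis unfolding permvars_def using False i by simp
  qed
qed

lemma core_gs:
  fixes fs :: "mpoly list" and n k m :: nat and C
  assumes C: "subring_C C" and len: "length fs = k"
    and fsp: "\<forall>f\<in>set fs. is_mpoly (m+n) C f"
  defines "N \<equiv> fact n" and "L \<equiv> fact (fact n)" and "P \<equiv> {\<pi>. \<pi> permutes {..<n}}"
  defines "e \<equiv> \<lambda>i j z. coeff (\<Prod>\<pi>\<in>P. [:meval (m+n) (fs!i) (permvars m n \<pi> z), 1:]) (N - j)"
  shows "\<exists>gs. (\<forall>g\<in>set gs. is_mpoly (m+n) C g) \<and>
     (\<forall>z. Sf (m+n) gs (symvars m n z) = (\<Sum>ij\<in>{..<k} \<times> {1..N}. (cmod (e (fst ij) (snd ij) z ^ (L div snd ij)))\<^sup>2))"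
proof -
  have fP: "finite P" unfolding P_def by (rule finite_permutations) simp
  have ok: "\<exists>p. is_mpoly (m+n) C p \<and> (\<forall>z. meval (m+n) p (symvars m n z) = e i j z ^ (L div j))"
    if i: "i < k" for i j
  proof -
    have fi: "PF C (m+n) (meval (m+n) (fs!i))" using fsp i len by (intro mpoly_PF C) auto
    have PFe: "PF C (m+n) (e i j)" unfolding e_def
      by (intro PF_lprod_coeff fP C ballI PF_permvars[OF C _ fi]) (simp add: P_def)
    have sym: "e i j (z \<circ> Transposition.transpose (m+a) (m+b)) = e i j z" if ab: "a < n" "b < n" for a b z
    proof -
      let ?t = "Transposition.transpose a b"
      have tp: "?t permutes {..<n}" using ab by (intro permutes_swap_id) auto
      have "(\<Prod>\<pi>\<in>P. [:meval (m+n) (fs!i) (permvars m n \<pi> (permvars m n ?t z)), 1:]) =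
            (\<Prod>\<pi>\<in>P. [:meval (m+n) (fs!i) (permvars m n (?t \<circ> \<pi>) z), 1:])"
        by (intro prod.cong refl) (simp add: permvars_comp P_def)
      also have "\<dots> = (\<Prod>\<pi>\<in>P. [:meval (m+n) (fs!i) (permvars m n \<pi> z), 1:])"
        by (rule prod.reindex_bij_witness[of _ "\<lambda>\<pi>. ?t \<circ> \<pi>" "\<lambda>\<pi>. ?t \<circ> \<pi>"])
           (auto simp: P_def o_assoc[symmetric] intro: permutes_compose[OF _ tp])
      finally show ?thesis unfolding e_def swap_permvars[OF ab] by simp
    qed
    obtain \<psi> where \<psi>: "PF C (m+n) \<psi>" "\<forall>z. e i j z = \<psi> (symvars m n z)"
      using sym_thm[OF C PFe] sym by blast
    obtain p where p: "is_mpoly (m+n) C p" "\<forall>z. meval (m+n) p z = \<psi> z ^ (L div j)"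
      using PF_mpoly[OF C PF_power[OF C \<psi>(1)]] by blast
    show ?thesis using p \<psi>(2) by auto
  qed
  then have "\<forall>ij\<in>{..<k} \<times> {1..N}. \<exists>p. is_mpoly (m+n) C p \<and>
      (\<forall>z. meval (m+n) p (symvars m n z) = e (fst ij) (snd ij) z ^ (L div snd ij))" by auto
  then obtain gg where gg: "\<forall>ij\<in>{..<k} \<times> {1..N}. is_mpoly (m+n) C (gg ij) \<and>
      (\<forall>z. meval (m+n) (gg ij) (symvars m n z) = e (fst ij) (snd ij) z ^ (L div snd ij))"
    by metis
  define lst where "lst = List.product [0..<k] [1..<Suc N]"
  have dl: "distinct lst" unfolding lst_def by (intro distinct_product) auto
  have sl: "set lst = {..<k} \<times> {1..N}" unfolding lst_def by auto
  show ?thesis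
  proof (intro exI[of _ "map gg lst"] conjI allI ballI)
    fix g assume "g \<in> set (map gg lst)"
    then show "is_mpoly (m+n) C g" using gg sl by auto
  next
    fix z
    have "Sf (m+n) (map gg lst) (symvars m n z) = (\<Sum>ij\<in>set lst. (cmod (meval (m+n) (gg ij) (symvars m n z)))\<^sup>2)"
      unfolding Sf_def map_map comp_def by (rule sum_list_distinct_conv_sum_set[OF dl])
    also have "\<dots> = (\<Sum>ij\<in>{..<k} \<times> {1..N}. (cmod (e (fst ij) (snd ij) z ^ (L div snd ij)))\<^sup>2)"
      unfolding sl using gg by (intro sum.cong refl) auto
    finally show "Sf (m+n) (map gg lst) (symvars m n z) = (\<Sum>ij\<in>{..<k} \<times> {1..N}. (cmod (e (fst ij) (snd ij) z ^ (L div snd ij)))\<^sup>2)" .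
  qed
qed


lemma pow_le_base: "0 < q \<Longrightarrow> (a::real)^q \<le> b^q \<Longrightarrow> 0 \<le> b \<Longrightarrow> a \<le> b"
  by (cases q) (auto intro: power_le_imp_le_base)

lemma core_bounds:
  fixes fs :: "mpoly list" and n k m :: nat and z
  assumes len: "length fs = k"
    and Ssym: "\<forall>\<pi>. \<pi> permutes {..<n} \<longrightarrow> Sf (m+n) fs (permvars m n \<pi> z) = Sf (m+n) fs z"
  defines "N \<equiv> fact n" and "L \<equiv> fact (fact n)" and "P \<equiv> {\<pi>. \<pi> permutes {..<n}}"
  defines "e \<equiv> \<lambda>i j z. coeff (\<Prod>\<pi>\<in>P. [:meval (m+n) (fs!i) (permvars m n \<pi> z), 1:]) (N - j)"
  defines "G \<equiv> (\<Sum>ij\<in>{..<k} \<times> {1..N}. (cmod (e (fst ij) (snd ij) z ^ (L div snd ij)))\<^sup>2)"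
  shows "G \<le> real k * real N * 4^(N*L) * Sf (m+n) fs z ^ L"
    and "Sf (m+n) fs z ^ L \<le> (4 * real k)^L * G"
proof -
  define S where "S = Sf (m+n) fs z"
  have Sdef: "Sf (m+n) fs w = (\<Sum>i<k. (cmod (meval (m+n) (fs!i) w))\<^sup>2)" for w
    unfolding Sf_def sum_list_sum_nth using len by (simp add: atLeast0LessThan)
  have S0: "S \<ge> 0" unfolding S_def Sdef by (intro sum_nonneg) auto
  have fP: "finite P" unfolding P_def by (rule finite_permutations) simp
  have cP: "card P = N" unfolding P_def N_def by (rule card_permutations) auto
  have N1: "N \<ge> 1" unfolding N_def by simp
  have L1: "L \<ge> 1" unfolding L_def by simp
  have Ldiv: "j * (L div j) = L" "L div j \<ge> 1" "L div j \<le> L" if "j \<in> {1..N}" for j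
  proof -
    have "j dvd L" unfolding L_def using that by (intro dvd_fact) (auto simp: N_def)
    then show "j * (L div j) = L" by simp
    then show "L div j \<ge> 1" using L1 by (cases "L div j") auto
    show "L div j \<le> L" by simp
  qed
  let ?u = "\<lambda>i \<pi>. meval (m+n) (fs!i) (permvars m n \<pi> z)"
  have ub: "cmod (?u i \<pi>) \<le> sqrt S" if "i < k" "\<pi> \<in> P" for i \<pi>
  proof (rule real_le_rsqrt)
    have "(cmod (?u i \<pi>))\<^sup>2 \<le> (\<Sum>i'<k. (cmod (meval (m+n) (fs!i') (permvars m n \<pi> z)))\<^sup>2)"
      using that by (intro member_le_sum) auto
    also have "\<dots> = S" unfolding S_def using Ssym that unfolding P_def Sdef[symmetric] by auto
    finally show "(cmod (?u i \<pi>))\<^sup>2 \<le> S" .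
  qed
  have eq_pow: "(cmod (x ^ q))\<^sup>2 = cmod x ^ (2 * q)" for x :: complex and q
    by (simp add: norm_power power_mult[symmetric] mult.commute)
  show "G \<le> real k * real N * 4^(N*L) * Sf (m+n) fs z ^ L"
  proof -
    have "G \<le> real (card ({..<k} \<times> {1..N})) * (4^(N*L) * S^L)"
      unfolding G_def
    proof (rule sum_bounded_above)
      fix ij assume ij: "ij \<in> {..<k} \<times> {1..N}"
      obtain i j where ijd: "ij = (i, j)" "i < k" "j \<in> {1..N}" using ij by auto
      let ?q = "L div j"
      have eb: "cmod (e i j z) \<le> 2^N * sqrt S ^ j"
      proof -
        have "cmod (e i j z) \<le> (if N - j \<le> card P then 2^card P * sqrt S^(card P - (N - j)) else 0)"
          unfolding e_def using ub ijd fP S0 by (intro lprod_coeff_bound) auto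
        then show ?thesis using cP ijd(3) by auto
      qed
      have "(cmod (e i j z ^ ?q))\<^sup>2 = cmod (e i j z) ^ (2 * ?q)" by (rule eq_pow)
      also have "\<dots> \<le> (2^N * sqrt S ^ j) ^ (2 * ?q)" by (intro power_mono eb) auto
      also have "\<dots> = 2^(N * (2 * ?q)) * (sqrt S ^ 2) ^ (j * ?q)"
        by (simp add: power_mult_distrib power_mult[symmetric] mult_ac)
      also have "\<dots> = 4^(N * ?q) * S ^ L" using S0 Ldiv(1)[OF ijd(3)]
        by (simp add: power_mult power_mult_distrib mult.commute[of N])
      also have "\<dots> \<le> 4^(N * L) * S ^ L"
        using Ldiv(3)[OF ijd(3)] S0 by (intro mult_right_mono power_increasing) auto
      finally show "(cmod (e (fst ij) (snd ij) z ^ (L div snd ij)))\<^sup>2 \<le> 4^(N * L) * S ^ L" using ijd by simp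
    qed
    then show ?thesis unfolding S_def by (simp add: card_cartesian_product mult_ac)
  qed
  show "Sf (m+n) fs z ^ L \<le> (4 * real k)^L * G"
  proof -
    have G0: "G \<ge> 0" unfolding G_def by (intro sum_nonneg) auto
    define B where "B = root (2 * L) G"
    have B0: "B \<ge> 0" unfolding B_def using G0 by (rule real_root_ge_zero)
    have BG: "B ^ (2 * L) = G" unfolding B_def using G0 L1 by simp
    have eb: "cmod (e i j z) \<le> B ^ j" if "i < k" "j \<in> {1..N}" for i j
    proof (rule pow_le_base)
      show "0 < 2 * (L div j)" using Ldiv(2)[OF that(2)] by simp
      have "cmod (e i j z) ^ (2 * (L div j)) = (cmod (e i j z ^ (L div j)))\<^sup>2" by (simp add: eq_pow)
      also have "\<dots> \<le> G"
      proof -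
        let ?f = "\<lambda>ij. (cmod (e (fst ij) (snd ij) z ^ (L div snd ij)))\<^sup>2"
        have "?f (i, j) \<le> sum ?f ({..<k} \<times> {1..N})" by (rule member_le_sum) (use that in auto)
        then show ?thesis unfolding G_def by simp
      qed
      also have "\<dots> = (B ^ j) ^ (2 * (L div j))"
      proof -
        have "j * (2 * (L div j)) = 2 * L" using Ldiv(1)[OF that(2)] by (metis mult.left_commute)
        then show ?thesis using BG by (simp only: power_mult[symmetric])
      qed
      finally show "cmod (e i j z) ^ (2 * (L div j)) \<le> (B ^ j) ^ (2 * (L div j))" .
      show "0 \<le> B ^ j" using B0 by simp
    qed
    have fb: "cmod (meval (m+n) (fs!i) z) \<le> 2 * B" if i: "i < k" for i
    proof -
      define p where "p = (\<Prod>\<pi>\<in>P. [:?u i \<pi>, 1:])"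
      have dp: "degree p = N" unfolding p_def using lprod_degree[OF fP] cP by simp
      have tp: "coeff p N = 1" unfolding p_def using lprod_top[OF fP, of "?u i"] cP by simp
      have idP: "id \<in> P" unfolding P_def by simp
      have "poly p (- ?u i id) = 0" unfolding p_def poly_prod
        by (rule prod_zero[OF fP]) (use idP in auto)
      then have z0: "(\<Sum>kk\<le>N. coeff p kk * (- ?u i id)^kk) = 0" by (simp add: poly_altdef dp)
      have cb: "\<forall>kk<N. cmod (coeff p kk) \<le> B^(N-kk)"
      proof (intro allI impI)
        fix kk assume kk: "kk < N"
        have "coeff p kk = e i (N - kk) z" unfolding p_def e_def using kk by simp
        then show "cmod (coeff p kk) \<le> B^(N-kk)" using eb[OF i, of "N - kk"] kk by simp
      qed
      have "cmod (- ?u i id) \<le> 2 * B" by (rule root_bound[OF z0 tp cb B0])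
      then show ?thesis by (simp add: permvars_id)
    qed
    have "S \<le> (\<Sum>i<k. (2 * B)\<^sup>2)" unfolding S_def Sdef
      using fb by (intro sum_mono power_mono) auto
    also have "\<dots> = 4 * real k * B^2" by (simp add: power_mult_distrib)
    finally have "S ^ L \<le> (4 * real k * B^2) ^ L" using S0 by (intro power_mono) auto
    also have "\<dots> = (4 * real k)^L * G" using BG by (simp add: power_mult_distrib power_mult[symmetric] mult.commute)
    finally show ?thesis unfolding S_def .
  qed
qed

theorem lemma4p3:
  fixes \<epsilon> :: real and D n k :: nat
  assumes "\<epsilon> \<in> \<rat>" "\<epsilon> \<ge> 0" "D > 0"
  shows "\<exists>c1 c2. c1 > 0 \<and> c2 > 0 \<and>
    (\<forall>(C :: complex set) m (fs :: mpoly list).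
       subring_C C \<and> length fs = k \<and>
       (\<forall>f\<in>set fs. is_mpoly (m + n) C f \<and> mdeg_le (m + n) f D) \<and>
       (\<forall>\<pi> z. \<pi> permutes {..<n} \<longrightarrow>
            apow (m + n) fs \<epsilon> (permvars m n \<pi> z) = apow (m + n) fs \<epsilon> z)
     \<longrightarrow> (\<exists>(gs :: mpoly list) \<epsilon>'. \<epsilon>' \<in> \<rat> \<and> \<epsilon>' \<ge> 0 \<and>
            (\<forall>g\<in>set gs. is_mpoly (m + n) C g) \<and>
            (\<forall>z. c1 * apow (m + n) gs \<epsilon>' (symvars m n z) \<le> apow (m + n) fs \<epsilon> z \<and>
                 apow (m + n) fs \<epsilon> z \<le> c2 * apow (m + n) gs \<epsilon>' (symvars m n z))))"
proof -
  define N :: nat where "N = fact n"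
  define L :: nat where "L = fact (fact n)"
  define b where "b = \<epsilon> / real L / 2"
  define K1 where "K1 = real k * real N * 4^(N*L) + 1"
  define K2 where "K2 = (4 * real k)^L + 1"
  have L0: "L > 0" unfolding L_def by simp
  have b0: "b \<ge> 0" unfolding b_def using assms(2) by simp
  have K1p: "K1 > 0" unfolding K1_def by (simp add: add_nonneg_pos)
  have K2p: "K2 > 0" unfolding K2_def by (simp add: add_nonneg_pos)
  have c1p: "(1/K1) powr b > 0" using K1p by simp
  have c2p: "K2 powr b > 0" using K2p by simp
  have main: "\<exists>(gs :: mpoly list) \<epsilon>'. \<epsilon>' \<in> \<rat> \<and> \<epsilon>' \<ge> 0 \<and>
            (\<forall>g\<in>set gs. is_mpoly (m + n) C g) \<and>
            (\<forall>z. (1/K1) powr b * apow (m + n) gs \<epsilon>' (symvars m n z) \<le> apow (m + n) fs \<epsilon> z \<and>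
                 apow (m + n) fs \<epsilon> z \<le> K2 powr b * apow (m + n) gs \<epsilon>' (symvars m n z))"
    if H: "subring_C C \<and> length fs = k \<and>
       (\<forall>f\<in>set fs. is_mpoly (m + n) C f \<and> mdeg_le (m + n) f D) \<and>
       (\<forall>\<pi> z. \<pi> permutes {..<n} \<longrightarrow>
            apow (m + n) fs \<epsilon> (permvars m n \<pi> z) = apow (m + n) fs \<epsilon> z)"
    for C :: "complex set" and m :: nat and fs :: "mpoly list"
  proof -
    from H have C: "subring_C C" and len: "length fs = k" and fsp: "\<forall>f\<in>set fs. is_mpoly (m + n) C f"
      and hsym: "\<forall>\<pi> z. \<pi> permutes {..<n} \<longrightarrow>
            apow (m + n) fs \<epsilon> (permvars m n \<pi> z) = apow (m + n) fs \<epsilon> z" by auto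
    show ?thesis
    proof (cases "\<epsilon> = 0")
      case True
      then have "b = 0" unfolding b_def by simp
      then show ?thesis using True K1p K2p
        by (intro exI[of _ "[]"] exI[of _ 0]) (simp add: apow_def)
    next
      case False
      then have ep: "\<epsilon> > 0" using assms(2) by simp
      have apS: "apow N' ps \<epsilon> w = Sf N' ps w powr (\<epsilon>/2)" for N' ps w
        unfolding apow_def Sf_def using False by simp
      have inj: "x = y" if "x \<ge> 0" "y \<ge> 0" "x powr (\<epsilon>/2) = y powr (\<epsilon>/2)" for x y :: real
      proof -
        have "x = (x powr (\<epsilon>/2)) powr (2/\<epsilon>)" using that(1) ep by (simp add: powr_powr)
        also have "\<dots> = (y powr (\<epsilon>/2)) powr (2/\<epsilon>)" using that(3) by simp
        also have "\<dots> = y" using that(2) ep by (simp add: powr_powr)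
        finally show ?thesis .
      qed
      have Sf0: "Sf N' ps w \<ge> 0" for N' ps w unfolding Sf_def by (induction ps) auto
      have Ssym: "\<forall>\<pi>. \<pi> permutes {..<n} \<longrightarrow> Sf (m+n) fs (permvars m n \<pi> z) = Sf (m+n) fs z" for z
        using hsym inj Sf0 by (simp add: apS)
      obtain gs where gs: "\<forall>g\<in>set gs. is_mpoly (m+n) C g"
        "\<forall>z. Sf (m+n) gs (symvars m n z) = (\<Sum>ij\<in>{..<k} \<times> {1..fact n}.
           (cmod (coeff (\<Prod>\<pi>\<in>{\<pi>. \<pi> permutes {..<n}}. [:meval (m+n) (fs!(fst ij)) (permvars m n \<pi> z), 1:]) (fact n - snd ij)
             ^ (fact (fact n) div snd ij)))\<^sup>2)"
        using core_gs[OF C len fsp] by blast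
      have pw: "(s ^ L) powr b = s powr (\<epsilon>/2)" if "s \<ge> 0" for s :: real
      proof -
        have "(s ^ L) powr b = (s powr real L) powr b" using that L0 by (simp add: powr_realpow')
        also have "\<dots> = s powr (real L * b)" by (simp add: powr_powr)
        also have "real L * b = \<epsilon>/2" unfolding b_def using L0 by simp
        finally show ?thesis .
      qed
      show ?thesis
      proof (intro exI[of _ gs] exI[of _ "\<epsilon> / real L"] conjI allI)
        show "\<epsilon> / real L \<in> \<rat>" using assms(1) by (simp add: Rats_divide)
        show "\<epsilon> / real L \<ge> 0" using assms(2) by simp
        show "\<forall>g\<in>set gs. is_mpoly (m + n) C g" by (rule gs(1))
        fix z
        define S where "S = Sf (m+n) fs z"
        define G where "G = Sf (m+n) gs (symvars m n z)"
        have bds: "G \<le> real k * real N * 4^(N*L) * S ^ L" "S ^ L \<le> (4 * real k)^L * G"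
          using core_bounds[OF len Ssym[of z]] gs(2) unfolding S_def G_def N_def L_def by simp_all
        have S0: "S \<ge> 0" "G \<ge> 0" unfolding S_def G_def by (rule Sf0)+
        have e1: "apow (m + n) gs (\<epsilon> / real L) (symvars m n z) = G powr b"
          unfolding apow_def G_def Sf_def b_def using False L0 by simp
        have e2: "apow (m + n) fs \<epsilon> z = (S ^ L) powr b" using pw[OF S0(1)] apS[of "m+n" fs z] unfolding S_def by simp
        have "(1/K1) powr b * G powr b = (G / K1) powr b" by (simp add: powr_mult[symmetric])
        also have "\<dots> \<le> (S ^ L) powr b"
        proof (rule powr_mono2[OF b0])
          show "0 \<le> G / K1" using S0 K1p by simp
          have "S ^ L \<ge> 0" using S0 by simp
          then have "G \<le> K1 * S ^ L" using bds(1) unfolding K1_def distrib_right by simp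
          then show "G / K1 \<le> S ^ L" using K1p by (simp add: divide_le_eq mult.commute)
        qed
        finally show "(1/K1) powr b * apow (m + n) gs (\<epsilon> / real L) (symvars m n z) \<le> apow (m + n) fs \<epsilon> z"
          using e1 e2 by simp
        have "(S ^ L) powr b \<le> (K2 * G) powr b"
        proof (rule powr_mono2[OF b0])
          show "0 \<le> S ^ L" using S0 by simp
          show "S ^ L \<le> K2 * G" using bds(2) S0 unfolding K2_def distrib_right by simp
        qed
        also have "\<dots> = K2 powr b * G powr b" by (simp add: powr_mult)
        finally show "apow (m + n) fs \<epsilon> z \<le> K2 powr b * apow (m + n) gs (\<epsilon> / real L) (symvars m n z)"
          using e1 e2 by simp
      qed
    qed
  qed
  show ?thesis
    apply (rule exI[of _ "(1/K1) powr b"])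
    apply (rule exI[of _ "K2 powr b"])
    apply (rule conjI[OF c1p conjI[OF c2p]])
    apply (intro allI impI)
    by (rule main)
qed

end
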